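(* Let $(V,d)$ be a finite metric space with root $r\in V$ and let $\pi$ be any master tour on $(V,d)$. Let $\{q_v\}_{v\in V}$ and $\{\bar p_v\}_{v\in V}$ be probabilities with $0\le q_v\le\bar p_v\le 1$ for each $v\in V$. Then the expected latency of $\pi$ when each vertex $v$ is independently active with probability $q_v$ is at most the expected latency of $\pi$ when each vertex $v$ is independently active with probability $\bar p_v$.
   Context: A master tour $\pi$ is a tour starting at the root $r$ visiting all vertices of $V$. For an active set $A\subseteq V$, $\pi_A$ visits the vertices of $A$ starting from $r$ in the order of $\pi$ (shortcutting inactive vertices); the latency of $v\in A$ is the length of the path from $r$ to $v$ along $\pi_A$. The expected latency of $\pi$ under probabilities $\{x_v\}$ is $\mathbb{E}_A[\sum_{v\in A}(\text{latency of }v\text{ in }\pi_A)]$ where $A$ contains each $v$ independently with probability $x_v$. *)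

theory Defs
  imports Main "HOL-Library.FuncSet" Complex_Main
begin

definition finite_metric_space :: "'a set \<Rightarrow> ('a \<Rightarrow> 'a \<Rightarrow> real) \<Rightarrow> bool" where
  "finite_metric_space V d \<longleftrightarrow> finite V \<and>
     (\<forall>u\<in>V. \<forall>v\<in>V. d u v \<ge> 0) \<and>
     (\<forall>u\<in>V. \<forall>v\<in>V. d u v = 0 \<longleftrightarrow> u = v) \<and>
     (\<forall>u\<in>V. \<forall>v\<in>V. d u v = d v u) \<and>
     (\<forall>u\<in>V. \<forall>v\<in>V. \<forall>w\<in>V. d u w \<le> d u v + d v w)"

definition master_tour :: "'a set \<Rightarrow> 'a \<Rightarrow> 'a list \<Rightarrow> bool" where
  "master_tour V r \<pi> \<longleftrightarrow> distinct \<pi> \<and> set \<pi> = V \<and> \<pi> \<noteq> [] \<and> hd \<pi> = r"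

definition path_len :: "('a \<Rightarrow> 'a \<Rightarrow> real) \<Rightarrow> 'a list \<Rightarrow> real" where
  "path_len d xs = (\<Sum>(u, v)\<leftarrow>zip xs (tl xs). d u v)"

definition shortcut_tour :: "'a list \<Rightarrow> 'a set \<Rightarrow> 'a list" where
  "shortcut_tour \<pi> A = hd \<pi> # filter (\<lambda>u. u \<in> A) (tl \<pi>)"

definition latency :: "('a \<Rightarrow> 'a \<Rightarrow> real) \<Rightarrow> 'a list \<Rightarrow> 'a set \<Rightarrow> 'a \<Rightarrow> real" where
  "latency d \<pi> A v = path_len d (takeWhile (\<lambda>u. u \<noteq> v) (shortcut_tour \<pi> A) @ [v])"

definition total_latency :: "('a \<Rightarrow> 'a \<Rightarrow> real) \<Rightarrow> 'a list \<Rightarrow> 'a set \<Rightarrow> real" where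
  "total_latency d \<pi> A = (\<Sum>v\<in>A. latency d \<pi> A v)"

definition set_prob :: "'a set \<Rightarrow> ('a \<Rightarrow> real) \<Rightarrow> 'a set \<Rightarrow> real" where
  "set_prob V x A = (\<Prod>v\<in>A. x v) * (\<Prod>v\<in>V - A. 1 - x v)"

definition expected_latency :: "'a set \<Rightarrow> ('a \<Rightarrow> 'a \<Rightarrow> real) \<Rightarrow> 'a list \<Rightarrow> ('a \<Rightarrow> real) \<Rightarrow> real" where
  "expected_latency V d \<pi> x = (\<Sum>A\<in>Pow V. set_prob V x A * total_latency d \<pi> A)"

end

theory Submission
  imports Defs
begin

lemma pl_nil[simp]: "path_len d [] = 0" by (simp add: path_len_def)
lemma pl_one[simp]: "path_len d [a] = 0" by (simp add: path_len_def)
lemma pl_cons2[simp]: "path_len d (a # b # ys) = d a b + path_len d (b # ys)"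
  by (simp add: path_len_def)

lemma pl_nonneg:
  assumes "\<forall>u\<in>V. \<forall>v\<in>V. d u v \<ge> 0" "set xs \<subseteq> V"
  shows "path_len d xs \<ge> 0"
  using assms(2)
proof (induction xs rule: induct_list012)
  case (3 x y zs)
  then show ?case using assms(1) by (simp add: add_nonneg_nonneg)
qed auto

lemma pl_tri:
  assumes "\<forall>u\<in>V. \<forall>v\<in>V. \<forall>w\<in>V. d u w \<le> d u v + d v w"
    "a \<in> V" "x \<in> V" "set ys \<subseteq> V" "ys \<noteq> []"
  shows "path_len d (a # ys) \<le> d a x + path_len d (x # ys)"
proof -
  obtain y ys' where ys: "ys = y # ys'" using assms(5) by (cases ys) auto
  have "d a y \<le> d a x + d x y" using assms ys by auto
  then show ?thesis using ys by simp
qed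

lemma pl_mono:
  assumes tri: "\<forall>u\<in>V. \<forall>v\<in>V. \<forall>w\<in>V. d u w \<le> d u v + d v w"
    and AB: "A \<subseteq> B" and vA: "v \<in> A"
  shows "a \<in> V \<Longrightarrow> set rest \<subseteq> V \<Longrightarrow> v \<in> set rest \<Longrightarrow> a \<noteq> v \<Longrightarrow>
    path_len d (a # takeWhile (\<lambda>u. u \<noteq> v) (filter (\<lambda>u. u \<in> A) rest) @ [v])
    \<le> path_len d (a # takeWhile (\<lambda>u. u \<noteq> v) (filter (\<lambda>u. u \<in> B) rest) @ [v])"
proof (induction rest arbitrary: a)
  case Nil
  then show ?case by simp
next
  case (Cons x rest)
  show ?case
  proof (cases "x = v")
    case True
    then show ?thesis using vA AB by auto
  next
    case False
    note xv = False
    then have vr: "v \<in> set rest" using Cons by auto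
    have xV: "x \<in> V" using Cons by auto
    have IH: "path_len d (x # takeWhile (\<lambda>u. u \<noteq> v) (filter (\<lambda>u. u \<in> A) rest) @ [v])
    \<le> path_len d (x # takeWhile (\<lambda>u. u \<noteq> v) (filter (\<lambda>u. u \<in> B) rest) @ [v])"
      using Cons.IH[of x] Cons.prems vr False xV by auto
    show ?thesis
    proof (cases "x \<in> A")
      case True
      then show ?thesis using False AB IH by auto
    next
      case xA: False
      show ?thesis
      proof (cases "x \<in> B")
        case False
        then show ?thesis using xA xv Cons.IH[of a] Cons.prems vr by auto
      next
        case True
        have s: "set (takeWhile (\<lambda>u. u \<noteq> v) (filter (\<lambda>u. u \<in> A) rest) @ [v]) \<subseteq> V"
          using Cons.prems by (auto dest!: set_takeWhileD)
        have "path_len d (a # takeWhile (\<lambda>u. u \<noteq> v) (filter (\<lambda>u. u \<in> A) rest) @ [v])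
           \<le> d a x + path_len d (x # takeWhile (\<lambda>u. u \<noteq> v) (filter (\<lambda>u. u \<in> A) rest) @ [v])"
          using pl_tri[OF tri _ xV s] Cons.prems by auto
        also have "\<dots> \<le> d a x + path_len d (x # takeWhile (\<lambda>u. u \<noteq> v) (filter (\<lambda>u. u \<in> B) rest) @ [v])"
          using IH by simp
        also have "\<dots> = path_len d (a # takeWhile (\<lambda>u. u \<noteq> v) (filter (\<lambda>u. u \<in> B) (x # rest)) @ [v])"
          using True xv by (cases "takeWhile (\<lambda>u. u \<noteq> v) (filter (\<lambda>u. u \<in> B) rest)") auto
        finally show ?thesis using xA by simp
      qed
    qed
  qed
qed

lemma total_mono:
  assumes ms: "finite_metric_space V d" and mt: "master_tour V r \<pi>"
    and AB: "A \<subseteq> B" and BV: "B \<subseteq> V"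
  shows "total_latency d \<pi> A \<le> total_latency d \<pi> B"
proof -
  obtain rest where pi: "\<pi> = r # rest" using mt unfolding master_tour_def
    by (cases \<pi>) auto
  have dist: "r \<notin> set rest" and V: "V = insert r (set rest)"
    using mt pi unfolding master_tour_def by auto
  have nn: "\<forall>u\<in>V. \<forall>v\<in>V. d u v \<ge> 0" and tri: "\<forall>u\<in>V. \<forall>v\<in>V. \<forall>w\<in>V. d u w \<le> d u v + d v w"
    and fin: "finite V"
    using ms unfolding finite_metric_space_def by auto
  have lnn: "latency d \<pi> C v \<ge> 0" if "v \<in> V" for C v
  proof -
    have "set (takeWhile (\<lambda>u. u \<noteq> v) (shortcut_tour \<pi> C) @ [v]) \<subseteq> V"
      using that V pi unfolding shortcut_tour_def by (auto dest!: set_takeWhileD)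
    then show ?thesis unfolding latency_def using pl_nonneg[OF nn] by blast
  qed
  have lm: "latency d \<pi> A v \<le> latency d \<pi> B v" if "v \<in> A" for v
  proof (cases "v = r")
    case True
    then show ?thesis unfolding latency_def shortcut_tour_def pi by simp
  next
    case False
    have "v \<in> set rest" using that AB BV V False by auto
    then show ?thesis unfolding latency_def shortcut_tour_def pi
      using pl_mono[OF tri AB that, of r rest] False V by auto
  qed
  have finB: "finite B" using BV fin finite_subset by blast
  have "total_latency d \<pi> A \<le> (\<Sum>v\<in>A. latency d \<pi> B v)"
    unfolding total_latency_def by (rule sum_mono) (use lm in auto)
  also have "\<dots> \<le> (\<Sum>v\<in>B. latency d \<pi> B v)"
    by (rule sum_mono2[OF finB AB]) (use lnn BV in auto)
  finally show ?thesis unfolding total_latency_def .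
qed

lemma sp_out:
  assumes "finite W" "w \<notin> W" "A \<subseteq> W"
  shows "set_prob (insert w W) x A = (1 - x w) * set_prob W x A"
proof -
  have "insert w W - A = insert w (W - A)" using assms by auto
  then show ?thesis unfolding set_prob_def using assms by simp
qed

lemma sp_in:
  assumes "finite W" "w \<notin> W" "A \<subseteq> W"
  shows "set_prob (insert w W) x (insert w A) = x w * set_prob W x A"
proof -
  have "insert w W - insert w A = W - A" using assms by auto
  moreover have "finite A" "w \<notin> A" using assms finite_subset by auto
  ultimately show ?thesis unfolding set_prob_def by simp
qed

lemma sp_nonneg:
  assumes "\<forall>v\<in>V. 0 \<le> x v \<and> x v \<le> 1" "A \<subseteq> V"
  shows "set_prob V x A \<ge> 0"
  unfolding set_prob_def using assms
  by (intro mult_nonneg_nonneg prod_nonneg) auto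

lemma decomp:
  assumes "finite W" "w \<notin> W"
  shows "(\<Sum>A\<in>Pow (insert w W). set_prob (insert w W) x A * f A)
       = (\<Sum>A\<in>Pow W. set_prob W x A * ((1 - x w) * f A + x w * f (insert w A)))"
proof -
  have disj: "Pow W \<inter> insert w ` Pow W = {}" using assms by auto
  have inj: "inj_on (insert w) (Pow W)" proof (rule inj_onI)
    fix X Y assume "X \<in> Pow W" "Y \<in> Pow W" "insert w X = insert w Y"
    moreover have "w \<notin> X" "w \<notin> Y" using assms calculation by auto
    ultimately show "X = Y" using insert_ident by metis
  qed
  have "(\<Sum>A\<in>Pow (insert w W). set_prob (insert w W) x A * f A)
      = (\<Sum>A\<in>Pow W. set_prob (insert w W) x A * f A)
        + (\<Sum>A\<in>insert w ` Pow W. set_prob (insert w W) x A * f A)"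
    unfolding Pow_insert using assms disj by (intro sum.union_disjoint) auto
  also have "(\<Sum>A\<in>insert w ` Pow W. set_prob (insert w W) x A * f A)
     = (\<Sum>A\<in>Pow W. set_prob (insert w W) x (insert w A) * f (insert w A))"
    using sum.reindex[OF inj] by simp
  also have "\<dots> = (\<Sum>A\<in>Pow W. x w * set_prob W x A * f (insert w A))"
    by (rule sum.cong) (use sp_in[OF assms] in auto)
  also have "(\<Sum>A\<in>Pow W. set_prob (insert w W) x A * f A)
     = (\<Sum>A\<in>Pow W. (1 - x w) * set_prob W x A * f A)"
    by (rule sum.cong) (use sp_out[OF assms] in auto)
  finally show ?thesis by (simp add: sum.distrib[symmetric] algebra_simps)
qed

lemma exp_mono:
  assumes "finite V"
  shows "\<forall>v\<in>V. 0 \<le> q v \<and> q v \<le> p v \<and> p v \<le> 1 \<Longrightarrow>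
    (\<And>A B. A \<subseteq> B \<Longrightarrow> B \<subseteq> V \<Longrightarrow> f A \<le> f B) \<Longrightarrow>
    (\<Sum>A\<in>Pow V. set_prob V q A * f A) \<le> (\<Sum>A\<in>Pow V. set_prob V p A * f A)"
  using assms
proof (induction V arbitrary: f rule: finite_induct)
  case empty
  then show ?case by (simp add: set_prob_def)
next
  case (insert w W)
  define g where "g t A = (1 - t) * f A + t * f (insert w A)" for t A
  have fm: "f A \<le> f (insert w A)" if "A \<subseteq> W" for A
    using insert.prems(2)[of A "insert w A"] that by auto
  have "(\<Sum>A\<in>Pow (insert w W). set_prob (insert w W) q A * f A)
     = (\<Sum>A\<in>Pow W. set_prob W q A * g (q w) A)"
    unfolding g_def using decomp[OF insert.hyps] .
  also have "\<dots> \<le> (\<Sum>A\<in>Pow W. set_prob W q A * g (p w) A)"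
  proof (rule sum_mono)
    fix A assume A: "A \<in> Pow W"
    have "set_prob W q A \<ge> 0"
      using insert.prems(1) A by (intro sp_nonneg) auto
    moreover have "g (q w) A \<le> g (p w) A"
    proof -
      have "g (q w) A = f A + q w * (f (insert w A) - f A)"
           "g (p w) A = f A + p w * (f (insert w A) - f A)"
        unfolding g_def by algebra+
      moreover have "q w * (f (insert w A) - f A) \<le> p w * (f (insert w A) - f A)"
        using fm[of A] A insert.prems(1) by (intro mult_right_mono) auto
      ultimately show ?thesis by simp
    qed
    ultimately show "set_prob W q A * g (q w) A \<le> set_prob W q A * g (p w) A"
      by (rule mult_left_mono[rotated])
  qed
  also have "\<dots> \<le> (\<Sum>A\<in>Pow W. set_prob W p A * g (p w) A)"
  proof (rule insert.IH)
    show "\<forall>v\<in>W. 0 \<le> q v \<and> q v \<le> p v \<and> p v \<le> 1" using insert.prems(1) by auto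
    fix A B assume AB: "A \<subseteq> B" "B \<subseteq> W"
    have pw: "0 \<le> p w" "p w \<le> 1" using insert.prems(1) by auto
    have "f A \<le> f B" "f (insert w A) \<le> f (insert w B)"
      using insert.prems(2)[of A B] insert.prems(2)[of "insert w A" "insert w B"] AB by auto
    then have "(1 - p w) * f A \<le> (1 - p w) * f B" "p w * f (insert w A) \<le> p w * f (insert w B)"
      using pw by (auto intro: mult_left_mono)
    then show "g (p w) A \<le> g (p w) B" unfolding g_def by simp
  qed
  also have "\<dots> = (\<Sum>A\<in>Pow (insert w W). set_prob (insert w W) p A * f A)"
    unfolding g_def using decomp[OF insert.hyps] by simp
  finally show ?case .
qed

theorem lemma2:
  fixes V :: "'a set" and d :: "'a \<Rightarrow> 'a \<Rightarrow> real" and r :: 'a and \<pi> :: "'a list"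
    and q p :: "'a \<Rightarrow> real"
  assumes "finite_metric_space V d" and "r \<in> V" and "master_tour V r \<pi>"
    and "\<And>v. v \<in> V \<Longrightarrow> 0 \<le> q v \<and> q v \<le> p v \<and> p v \<le> 1"
  shows "expected_latency V d \<pi> q \<le> expected_latency V d \<pi> p"
  unfolding expected_latency_def
proof (rule exp_mono)
  show "finite V" using assms(1) unfolding finite_metric_space_def by auto
  show "\<forall>v\<in>V. 0 \<le> q v \<and> q v \<le> p v \<and> p v \<le> 1" using assms(4) by auto
  show "\<And>A B. A \<subseteq> B \<Longrightarrow> B \<subseteq> V \<Longrightarrow> total_latency d \<pi> A \<le> total_latency d \<pi> B"
    using total_mono[OF assms(1) assms(3)] by blast
qed

end
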